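(* Let $f=\mathbb{E}_\xi[f_\xi]$ be convex and $L_{f/h}$-relatively smooth with respect to $h$, with minimizer $x^\star\in\operatorname{int}\operatorname{dom}h$ satisfying $\nabla f(x^\star)=0$. Suppose the noise assumption below holds with constant $\sigma^2$ and step size $\eta\le1/(2L_{f/h})$. Then the iterates of Bregman stochastic gradient descent with constant step size $\eta$ satisfy, for every $T\ge1$, $$\mathbb{E}\Big[\frac1T\sum_{t=0}^{T}D_f(x^\star,x_t)\Big]\le\frac{D_h(x^\star,x_0)}{\eta T}+\eta\sigma^2.$$
   Context: Let $C\subseteq\mathbb{R}^d$ be a closed convex set and $h:\mathbb{R}^d\to\mathbb{R}\cup\{+\infty\}$ a function satisfying the standing assumption: $h$ is twice continuously differentiable and strictly convex on $\operatorname{int} C$, and for every $y\in\mathbb{R}^d$ the problem $\min_{x\in C} h(x)-x^\top y$ has a unique solution, which lies in $\operatorname{int} C$. $h^*$ is the convex conjugate of $h$. For differentiable $\varphi$, $D_\varphi(x,y)=\varphi(x)-\varphi(y)-\nabla\varphi(y)^\top(x-y)$. A differentiable $f$ is $L$-relatively smooth w.r.t. $h$ if $D_f(x,y)\le L D_h(x,y)$ for all $x,y\in\operatorname{int}\operatorname{dom}h$. Bregman stochastic gradient descent (BSGD): given $x_0\in\operatorname{int}C$, $x_{t+1}=\arg\min_{x\in C}\{\eta g_t^\top x+D_h(x,x_t)\}$, equivalently $\nabla h(x_{t+1})=\nabla h(x_t)-\eta g_t$, where $g_t=\nabla f_{\xi_t}(x_t)$ and $\xi_t$ are drawn independently from the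 distribution of $\xi$. Noise assumption: every $f_\xi$ is convex and $L_{f/h}$-relatively smooth w.r.t. $h$, $\mathbb{E}_\xi[f_\xi]=f$, and there is $\sigma^2\ge0$ such that for all $t$, $\sigma^2\ge\frac{1}{2\eta^2}\mathbb{E}_{\xi_t}\big[D_{h^*}(\nabla h(x_t)-2\eta\nabla f_{\xi_t}(x^\star),\nabla h(x_t))\big]$. *)

theory Defs
  imports "HOL-Probability.Probability"
begin

definition grad :: "('a::euclidean_space \<Rightarrow> real) \<Rightarrow> 'a \<Rightarrow> 'a" where
  "grad \<phi> x = (THE g. (\<phi> has_derivative (\<lambda>v. inner g v)) (at x))"

definition bregman :: "('a::euclidean_space \<Rightarrow> real) \<Rightarrow> 'a \<Rightarrow> 'a \<Rightarrow> real" where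
  "bregman \<phi> x y = \<phi> x - \<phi> y - inner (grad \<phi> y) (x - y)"

definition strict_convex_on :: "'a::real_vector set \<Rightarrow> ('a \<Rightarrow> real) \<Rightarrow> bool" where
  "strict_convex_on S f \<longleftrightarrow>
     (\<forall>x\<in>S. \<forall>y\<in>S. x \<noteq> y \<longrightarrow> (\<forall>u::real. 0 < u \<longrightarrow> u < 1 \<longrightarrow>
        f ((1 - u) *\<^sub>R x + u *\<^sub>R y) < (1 - u) * f x + u * f y))"

definition fin :: "('a \<Rightarrow> ereal) \<Rightarrow> 'a \<Rightarrow> real" where
  "fin h x = real_of_ereal (h x)"

text \<open>Bregman divergence of an extended-real valued h, D_h(x,y), for y where h is
  finite and differentiable (x arbitrary; value +infinity where h x = +infinity).\<close>
definition bregman_e :: "('a::euclidean_space \<Rightarrow> ereal) \<Rightarrow> 'a \<Rightarrow> 'a \<Rightarrow> ereal" where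
  "bregman_e h x y = h x - ereal (fin h y + inner (grad (fin h) y) (x - y))"

definition conj :: "('a::euclidean_space \<Rightarrow> ereal) \<Rightarrow> 'a \<Rightarrow> ereal" where
  "conj h y = (SUP x. ereal (inner x y) - h x)"

definition bsgd_step :: "'a set \<Rightarrow> ('a::euclidean_space \<Rightarrow> ereal) \<Rightarrow> real \<Rightarrow> 'a \<Rightarrow> 'a \<Rightarrow> 'a" where
  "bsgd_step C h \<eta> g y = (THE x. x \<in> C \<and> (\<forall>z\<in>C.
      ereal (\<eta> * inner g x) + bregman_e h x y \<le> ereal (\<eta> * inner g z) + bregman_e h z y))"

primrec bsgd :: "'a set \<Rightarrow> ('a::euclidean_space \<Rightarrow> ereal) \<Rightarrow> real \<Rightarrow> ('b \<Rightarrow> 'a \<Rightarrow> real)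
    \<Rightarrow> 'a \<Rightarrow> (nat \<Rightarrow> 'b) \<Rightarrow> nat \<Rightarrow> 'a" where
  "bsgd C h \<eta> F x0 s 0 = x0"
| "bsgd C h \<eta> F x0 s (Suc t) =
     bsgd_step C h \<eta> (grad (F (s t)) (bsgd C h \<eta> F x0 s t)) (bsgd C h \<eta> F x0 s t)"

definition rel_smooth :: "('a::euclidean_space \<Rightarrow> real) \<Rightarrow> ('a \<Rightarrow> real) \<Rightarrow> real \<Rightarrow> 'a set \<Rightarrow> bool" where
  "rel_smooth f \<phi> L S \<longleftrightarrow> (\<forall>x\<in>S. \<forall>y\<in>S. bregman f x y \<le> L * bregman \<phi> x y)"

end

theory Submission
  imports Defs
begin

lemma grad_works:
  fixes \<phi> :: "'a::euclidean_space \<Rightarrow> real"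
  assumes "\<phi> differentiable (at x)"
  shows "(\<phi> has_derivative (\<lambda>v. inner (grad \<phi> x) v)) (at x)"
proof -
  obtain D where D: "(\<phi> has_derivative D) (at x)" using assms by (auto simp: differentiable_def)
  then have lin: "linear D" using has_derivative_linear by blast
  define g where "g = adjoint D 1"
  have Dg: "D = (\<lambda>v. inner g v)"
  proof
    fix v show "D v = inner g v"
      using adjoint_works[OF lin, of v 1] by (simp add: g_def inner_commute)
  qed
  have ex: "\<exists>g. (\<phi> has_derivative (\<lambda>v. inner g v)) (at x)" using D Dg by auto
  have uniq: "g1 = g2" if "(\<phi> has_derivative (\<lambda>v. inner g1 v)) (at x)"
      "(\<phi> has_derivative (\<lambda>v. inner g2 v)) (at x)" for g1 g2
  proof -
    have "(\<lambda>v. inner g1 v) = (\<lambda>v. inner g2 v)" using has_derivative_unique that by blast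
    then have "inner g1 (g1 - g2) = inner g2 (g1 - g2)" by metis
    then have "inner (g1 - g2) (g1 - g2) = 0" by (simp add: inner_diff_left)
    then show ?thesis by simp
  qed
  show ?thesis unfolding grad_def
    by (rule theI') (use ex uniq in blast)
qed

lemma grad_eqI:
  fixes \<phi> :: "'a::euclidean_space \<Rightarrow> real"
  assumes "(\<phi> has_derivative (\<lambda>v. inner g v)) (at x)"
  shows "grad \<phi> x = g"
proof -
  have "\<phi> differentiable (at x)" using assms by (auto simp: differentiable_def)
  from grad_works[OF this] assms have "(\<lambda>v. inner (grad \<phi> x) v) = (\<lambda>v. inner g v)"
    using has_derivative_unique by blast
  then have "inner (grad \<phi> x) (grad \<phi> x - g) = inner g (grad \<phi> x - g)" by metis
  then have "inner (grad \<phi> x - g) (grad \<phi> x - g) = 0" by (simp add: inner_diff_left)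
  then show ?thesis by simp
qed

lemma dirderiv:
  fixes \<phi> :: "'a::euclidean_space \<Rightarrow> real"
  assumes "\<phi> differentiable (at y)"
  shows "((\<lambda>t. (\<phi> (y + t *\<^sub>R v) - \<phi> y) / t) \<longlongrightarrow> inner (grad \<phi> y) v) (at_right 0)"
proof -
  have d1: "((\<lambda>t. y + t *\<^sub>R v) has_derivative (\<lambda>t. t *\<^sub>R v)) (at 0)"
    by (auto intro!: derivative_eq_intros)
  have "((\<lambda>t. \<phi> (y + t *\<^sub>R v)) has_derivative (\<lambda>t. inner (grad \<phi> y) (t *\<^sub>R v))) (at 0)"
  proof -
    have g: "(\<phi> has_derivative (\<lambda>w. inner (grad \<phi> y) w)) (at ((\<lambda>t. y + t *\<^sub>R v) 0))"
      using grad_works[OF assms] by simp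
    show ?thesis using has_derivative_compose[OF d1 g] by simp
  qed
  then have "((\<lambda>t. \<phi> (y + t *\<^sub>R v)) has_real_derivative inner (grad \<phi> y) v) (at 0)"
  proof -
    have e: "(\<lambda>t. t * (grad \<phi> y \<bullet> v)) = (*) (grad \<phi> y \<bullet> v)" by (rule ext) simp
    show ?thesis using \<open>((\<lambda>t. \<phi> (y + t *\<^sub>R v)) has_derivative (\<lambda>t. inner (grad \<phi> y) (t *\<^sub>R v))) (at 0)\<close>
      unfolding has_field_derivative_def inner_scaleR_right e .
  qed
  then have "((\<lambda>t. (\<phi> (y + t *\<^sub>R v) - \<phi> (y + 0 *\<^sub>R v)) / (t - 0)) \<longlongrightarrow> inner (grad \<phi> y) v) (at 0)"
    unfolding has_field_derivative_iff by simp
  then have "((\<lambda>t. (\<phi> (y + t *\<^sub>R v) - \<phi> y) / t) \<longlongrightarrow> inner (grad \<phi> y) v) (at 0)" by simp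
  then show ?thesis using filterlim_at_split by blast
qed

lemma grad_ineq:
  fixes \<phi> :: "'a::euclidean_space \<Rightarrow> real"
  assumes cv: "convex_on S \<phi>" and S: "y \<in> S" "z \<in> S" and d: "\<phi> differentiable (at y)"
  shows "\<phi> y + inner (grad \<phi> y) (z - y) \<le> \<phi> z"
proof -
  have lim: "((\<lambda>t. (\<phi> (y + t *\<^sub>R (z - y)) - \<phi> y) / t) \<longlongrightarrow> inner (grad \<phi> y) (z - y)) (at_right 0)"
    by (rule dirderiv[OF d])
  have ev: "eventually (\<lambda>t. (\<phi> (y + t *\<^sub>R (z - y)) - \<phi> y) / t \<le> \<phi> z - \<phi> y) (at_right (0::real))"
  proof -
    have "eventually (\<lambda>t. t \<in> {0<..<1::real}) (at_right 0)"
      by (simp add: eventually_at_right_field) (auto intro!: exI[of _ 1])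
    then show ?thesis
    proof eventually_elim
      case (elim t)
      have eq: "y + t *\<^sub>R (z - y) = (1 - t) *\<^sub>R y + t *\<^sub>R z" by (simp add: algebra_simps)
      have "\<phi> ((1 - t) *\<^sub>R y + t *\<^sub>R z) \<le> (1 - t) * \<phi> y + t * \<phi> z"
        using elim cv S by (intro convex_onD) auto
      then have "\<phi> (y + t *\<^sub>R (z - y)) - \<phi> y \<le> t * (\<phi> z - \<phi> y)" unfolding eq by (simp add: algebra_simps)
      then show ?case using elim by (simp add: divide_le_eq mult.commute)
    qed
  qed
  have "inner (grad \<phi> y) (z - y) \<le> \<phi> z - \<phi> y"
    by (rule tendsto_upperbound[OF lim ev]) simp
  then show ?thesis by simp
qed


locale bsetup =
  fixes C :: "'a::euclidean_space set" and h :: "'a \<Rightarrow> ereal"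
  assumes C: "closed C" "convex C"
    and h_ninf: "\<forall>x. h x \<noteq> -\<infinity>"
    and h_dom: "\<forall>x. x \<notin> C \<longrightarrow> h x = \<infinity>"
    and h_fin: "\<forall>x\<in>interior C. h x \<noteq> \<infinity>"
    and h_C1: "\<forall>x\<in>interior C. fin h differentiable (at x)"
    and h_C2: "\<exists>H :: 'a \<Rightarrow> 'a \<Rightarrow>\<^sub>L 'a. (\<forall>x\<in>interior C.
                 (grad (fin h) has_derivative blinfun_apply (H x)) (at x))
               \<and> continuous_on (interior C) H"
    and h_strict: "strict_convex_on (interior C) (fin h)"
    and h_argmin: "\<forall>y. \<exists>!x. x \<in> C \<and> (\<forall>z\<in>C. h x - ereal (inner x y) \<le> h z - ereal (inner z y))"
    and h_argmin_int: "\<forall>y x. x \<in> C \<and> (\<forall>z\<in>C. h x - ereal (inner x y) \<le> h z - ereal (inner z y))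
                              \<longrightarrow> x \<in> interior C"
begin

abbreviation "hr \<equiv> fin h"
abbreviation "Gh \<equiv> grad (fin h)"

definition Phi :: "'a \<Rightarrow> 'a" where
  "Phi u = (THE x. x \<in> C \<and> (\<forall>z\<in>C. h x - ereal (inner x u) \<le> h z - ereal (inner z u)))"

definition hs :: "'a \<Rightarrow> real" where
  "hs u = inner (Phi u) u - hr (Phi u)"

lemma Phi_prop: "Phi u \<in> C \<and> (\<forall>z\<in>C. h (Phi u) - ereal (inner (Phi u) u) \<le> h z - ereal (inner z u))"
  unfolding Phi_def by (rule theI') (use h_argmin in blast)

lemma Phi_int: "Phi u \<in> interior C"
  using Phi_prop h_argmin_int by blast

lemma Phi_unique: "x \<in> C \<Longrightarrow> (\<forall>z\<in>C. h x - ereal (inner x u) \<le> h z - ereal (inner z u)) \<Longrightarrow> Phi u = x"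
  using Phi_prop h_argmin by blast

lemma h_eq: "x \<in> interior C \<Longrightarrow> h x = ereal (hr x)"
  using h_fin h_ninf unfolding fin_def by (cases "h x") auto

lemma hr_min: "z \<in> interior C \<Longrightarrow> hr (Phi u) - inner (Phi u) u \<le> hr z - inner z u"
proof -
  assume z: "z \<in> interior C"
  then have "z \<in> C" using interior_subset by blast
  then have "h (Phi u) - ereal (inner (Phi u) u) \<le> h z - ereal (inner z u)" using Phi_prop by blast
  then show ?thesis using h_eq[OF z] h_eq[OF Phi_int[of u]] by simp
qed

lemma hr_diff: "x \<in> interior C \<Longrightarrow> (hr has_derivative (\<lambda>v. inner (Gh x) v)) (at x)"
  using h_C1 grad_works by blast

lemma hr_cont: "continuous_on (interior C) hr"
  using hr_diff has_derivative_continuous continuous_at_imp_continuous_on by blast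

lemma hr_convex: "convex_on (interior C) hr"
proof -
  have cv: "convex (interior C)" using C convex_interior by blast
  show ?thesis
  proof (rule convex_onI)
    fix t :: real and x y assume t: "0 < t" "t < 1" and xy: "x \<in> interior C" "y \<in> interior C"
    show "hr ((1 - t) *\<^sub>R x + t *\<^sub>R y) \<le> (1 - t) * hr x + t * hr y"
    proof (cases "x = y")
      case True
      have "(1 - t) *\<^sub>R x + t *\<^sub>R y = x" using True by (simp add: algebra_simps)
      moreover have "(1 - t) * hr x + t * hr y = hr x" using True by (simp add: algebra_simps)
      ultimately show ?thesis by simp
    next
      case False
      then show ?thesis using h_strict t xy unfolding strict_convex_on_def by force
    qed
  qed (rule cv)
qed

lemma gi: "x \<in> interior C \<Longrightarrow> z \<in> interior C \<Longrightarrow> hr x + inner (Gh x) (z - x) \<le> hr z"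
  using grad_ineq[OF hr_convex] h_C1 by blast

lemma Gh_Phi: "Gh (Phi u) = u"
proof -
  let ?x = "Phi u"
  have d: "((\<lambda>z. hr z - inner z u) has_derivative (\<lambda>v. inner (Gh ?x) v - inner v u)) (at ?x)"
    using hr_diff[OF Phi_int] by (auto intro!: derivative_eq_intros)
  have "eventually (\<lambda>z. z \<in> interior C) (at ?x)"
    using Phi_int eventually_at_topological by blast
  then have ev: "eventually (\<lambda>z. hr ?x - inner ?x u \<le> hr z - inner z u) (at ?x)"
    by eventually_elim (rule hr_min)
  have "(\<lambda>v. inner (Gh ?x) v - inner v u) = (\<lambda>v. 0)"
    by (rule has_derivative_local_min[OF d ev])
  then have "inner (Gh ?x) (Gh ?x - u) - inner (Gh ?x - u) u = 0" by metis
  then have "inner (Gh ?x - u) (Gh ?x - u) = 0" by (simp add: inner_diff_left inner_diff_right inner_commute)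
  then show ?thesis by simp
qed

lemma Phi_Gh: assumes x: "x \<in> interior C" shows "Phi (Gh x) = x"
proof -
  let ?g = "Gh x" let ?x' = "Phi ?g"
  have "hr x + inner ?g (?x' - x) \<le> hr ?x'" using gi[OF x Phi_int] .
  moreover have "hr ?x' - inner ?x' ?g \<le> hr x - inner x ?g" using hr_min[OF x] .
  ultimately have eq: "hr ?x' - inner ?x' ?g = hr x - inner x ?g"
    by (simp add: inner_diff_right inner_commute)
  have xC: "x \<in> C" using x interior_subset by blast
  show ?thesis
  proof (rule Phi_unique[OF xC], rule ballI)
    fix z assume "z \<in> C"
    then have "h ?x' - ereal (inner ?x' ?g) \<le> h z - ereal (inner z ?g)" using Phi_prop by blast
    moreover have "h ?x' - ereal (inner ?x' ?g) = h x - ereal (inner x ?g)"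
      using h_eq[OF x] h_eq[OF Phi_int[of ?g]] eq by simp
    ultimately show "h x - ereal (inner x ?g) \<le> h z - ereal (inner z ?g)" by simp
  qed
qed

lemma hs_ge: "z \<in> interior C \<Longrightarrow> inner z u - hr z \<le> hs u"
  using hr_min[of z u] unfolding hs_def by (simp add: inner_commute)

lemma hs_conj: "real_of_ereal (conj h u) = hs u"
proof -
  have "conj h u = ereal (hs u)"
    unfolding conj_def
  proof (rule antisym)
    show "(SUP x. ereal (inner x u) - h x) \<le> ereal (hs u)"
    proof (rule SUP_least)
      fix x
      show "ereal (inner x u) - h x \<le> ereal (hs u)"
      proof (cases "x \<in> C \<and> h x \<noteq> \<infinity>")
        case True
        then obtain r where r: "h x = ereal r" using h_ninf by (cases "h x") auto
        have "h (Phi u) - ereal (inner (Phi u) u) \<le> h x - ereal (inner x u)" using Phi_prop True by blast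
        then have "hr (Phi u) - inner (Phi u) u \<le> r - inner x u" using h_eq[OF Phi_int[of u]] r by simp
        then show ?thesis using r unfolding hs_def by simp
      next
        case False
        then have "h x = \<infinity>" using h_dom by blast
        then show ?thesis by simp
      qed
    qed
    show "ereal (hs u) \<le> (SUP x. ereal (inner x u) - h x)"
    proof -
      have "ereal (hs u) = ereal (inner (Phi u) u) - h (Phi u)"
        using h_eq[OF Phi_int[of u]] unfolding hs_def by simp
      then show ?thesis using SUP_upper[of "Phi u" UNIV "\<lambda>x. ereal (inner x u) - h x"] by simp
    qed
  qed
  then show ?thesis by simp
qed

lemma Gh_cont: "continuous_on (interior C) Gh"
proof -
  obtain H :: "'a \<Rightarrow> 'a \<Rightarrow>\<^sub>L 'a" where H: "\<forall>x\<in>interior C. (Gh has_derivative blinfun_apply (H x)) (at x)"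
    using h_C2 by blast
  then show ?thesis using has_derivative_continuous continuous_at_imp_continuous_on by blast
qed


lemma Phi_cont: "continuous_on UNIV Phi"
  unfolding continuous_on_iff
proof (intro ballI allI impI)
  fix u0 :: 'a and e :: real assume e: "0 < e"
  let ?x = "Phi u0"
  obtain r where r: "r > 0" "ball ?x r \<subseteq> interior C"
    using Phi_int open_contains_ball[of "interior C"] by blast
  define \<epsilon> where "\<epsilon> = min e r / 2"
  have \<epsilon>: "0 < \<epsilon>" "\<epsilon> < e" "\<epsilon> < r" using e r by (auto simp: \<epsilon>_def)
  have "cball ?x \<epsilon> \<subseteq> ball ?x r" using \<epsilon>(3) by (intro subsetI) (auto simp: mem_cball mem_ball)
  then have cb: "cball ?x \<epsilon> \<subseteq> interior C" using r(2) by blast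
  define \<psi> where "\<psi> z = hr z - hr ?x - inner (z - ?x) u0" for z
  have psi_nn: "0 \<le> \<psi> z" if "z \<in> interior C" for z
    using hr_min[OF that, of u0] by (simp add: \<psi>_def inner_diff_left)
  have psi_pos: "0 < \<psi> z" if z: "z \<in> interior C" "z \<noteq> ?x" for z
  proof (rule ccontr)
    assume "\<not> 0 < \<psi> z"
    then have eq: "\<psi> z = 0" using psi_nn[OF z(1)] by simp
    have zC: "z \<in> C" using z interior_subset by blast
    have "Phi u0 = z"
    proof (rule Phi_unique[OF zC], rule ballI)
      fix w assume "w \<in> C"
      then have "h ?x - ereal (inner ?x u0) \<le> h w - ereal (inner w u0)" using Phi_prop by blast
      moreover have "h ?x - ereal (inner ?x u0) = h z - ereal (inner z u0)"
        using h_eq[OF z(1)] h_eq[OF Phi_int[of u0]] eq by (simp add: \<psi>_def inner_diff_left)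
      ultimately show "h z - ereal (inner z u0) \<le> h w - ereal (inner w u0)" by simp
    qed
    then show False using z by simp
  qed
  let ?S = "sphere ?x \<epsilon>"
  have S_sub: "?S \<subseteq> interior C" using cb sphere_cball by blast
  have "continuous_on ?S \<psi>"
    unfolding \<psi>_def using continuous_on_subset[OF hr_cont S_sub]
    by (intro continuous_intros) auto
  then obtain zm where zm: "zm \<in> ?S" "\<forall>z\<in>?S. \<psi> zm \<le> \<psi> z"
    using continuous_attains_inf[of ?S \<psi>] \<epsilon> by auto
  define m where "m = \<psi> zm"
  have m: "0 < m" unfolding m_def using zm(1) S_sub \<epsilon> by (intro psi_pos) auto
  show "\<exists>d>0. \<forall>u\<in>UNIV. dist u u0 < d \<longrightarrow> dist (Phi u) (Phi u0) < e"
  proof (intro exI[of _ "m / \<epsilon>"] conjI ballI impI)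
    show "0 < m / \<epsilon>" using m \<epsilon> by simp
    fix u :: 'a assume du: "dist u u0 < m / \<epsilon>"
    let ?z = "Phi u"
    define n where "n = norm (?z - ?x)"
    have "n < \<epsilon>"
    proof (rule ccontr)
      assume "\<not> n < \<epsilon>"
      then have n: "\<epsilon> \<le> n" "0 < n" using \<epsilon> by auto
      define \<theta> where "\<theta> = \<epsilon> / n"
      have th: "0 < \<theta>" "\<theta> \<le> 1" using n \<epsilon> by (auto simp: \<theta>_def)
      define w where "w = (1 - \<theta>) *\<^sub>R ?x + \<theta> *\<^sub>R ?z"
      have "w - ?x = \<theta> *\<^sub>R (?z - ?x)" by (simp add: w_def algebra_simps)
      then have "norm (w - ?x) = \<epsilon>" using th n \<epsilon> by (simp add: \<theta>_def n_def)
      then have wS: "w \<in> ?S" by (simp add: dist_norm norm_minus_commute)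
      have cvx: "hr w \<le> (1 - \<theta>) * hr ?x + \<theta> * hr ?z"
        unfolding w_def using th Phi_int
        by (intro convex_onD[OF hr_convex]) auto
      have "inner (w - ?x) u0 = \<theta> * inner (?z - ?x) u0"
        using \<open>w - ?x = \<theta> *\<^sub>R (?z - ?x)\<close> by simp
      then have "\<psi> w \<le> \<theta> * \<psi> ?z" using cvx by (simp add: \<psi>_def algebra_simps)
      moreover have "m \<le> \<psi> w" using zm wS by (simp add: m_def)
      ultimately have A: "m \<le> \<theta> * \<psi> ?z" by simp
      have "hr ?z - inner ?z u \<le> hr ?x - inner ?x u" using hr_min[OF Phi_int] .
      then have "\<psi> ?z \<le> inner (?z - ?x) (u - u0)"
        by (simp add: \<psi>_def inner_diff_left inner_diff_right)
      also have "\<dots> \<le> n * norm (u - u0)" unfolding n_def by (rule norm_cauchy_schwarz)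
      also have "\<dots> < n * (m / \<epsilon>)" using du n by (intro mult_strict_left_mono) (auto simp: dist_norm)
      finally have "\<theta> * \<psi> ?z < \<theta> * (n * (m / \<epsilon>))" using th by (intro mult_strict_left_mono) auto
      also have "\<theta> * (n * (m / \<epsilon>)) = m" using n \<epsilon> by (simp add: \<theta>_def)
      finally show False using A by simp
    qed
    then show "dist (Phi u) (Phi u0) < e" using \<epsilon> by (simp add: dist_norm n_def)
  qed
qed

lemma hs_diff: "(hs has_derivative (\<lambda>v. inner (Phi u) v)) (at u)"
  unfolding has_derivative_iff_norm
proof
  show "bounded_linear (\<lambda>v. inner (Phi u) v)" by (rule bounded_linear_inner_right)
  have bnd: "norm (norm (hs v - hs u - inner (Phi u) (v - u)) / norm (v - u)) \<le> norm (Phi v - Phi u)" for v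
  proof (cases "v = u")
    case True then show ?thesis by simp
  next
    case False
    have lo: "0 \<le> hs v - hs u - inner (Phi u) (v - u)"
      using hs_ge[OF Phi_int, of u v] by (simp add: hs_def inner_diff_right)
    have up: "hs v - hs u - inner (Phi u) (v - u) \<le> inner (Phi v - Phi u) (v - u)"
      using hs_ge[OF Phi_int, of v u] by (simp add: hs_def inner_diff_right inner_diff_left)
    also have "\<dots> \<le> norm (Phi v - Phi u) * norm (v - u)" by (rule norm_cauchy_schwarz)
    finally have "norm (hs v - hs u - inner (Phi u) (v - u)) \<le> norm (Phi v - Phi u) * norm (v - u)"
      using lo by simp
    then show ?thesis using False by (simp add: divide_le_eq)
  qed
  have "((\<lambda>v. norm (Phi v - Phi u)) \<longlongrightarrow> 0) (at u)"
  proof -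
    have "isCont Phi u" using Phi_cont continuous_on_eq_continuous_at by blast
    then have "(Phi \<longlongrightarrow> Phi u) (at u)" by (simp add: isCont_def)
    then have "((\<lambda>v. Phi v - Phi u) \<longlongrightarrow> 0) (at u)" by (rule LIM_zero)
    then show ?thesis by (rule tendsto_norm_zero)
  qed
  then show "((\<lambda>v. norm (hs v - hs u - inner (Phi u) (v - u)) / norm (v - u)) \<longlongrightarrow> 0) (at u)"
  proof (rule Lim_null_comparison[rotated])
    show "\<forall>\<^sub>F v in at u. norm (norm (hs v - hs u - inner (Phi u) (v - u)) / norm (v - u)) \<le> norm (Phi v - Phi u)"
      using bnd by (intro always_eventually allI) blast
  qed
qed

lemma grad_hs: "grad hs u = Phi u"
  using grad_eqI[OF hs_diff] .

lemma grad_conj: "grad (\<lambda>y. real_of_ereal (conj h y)) u = Phi u"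
  using grad_hs by (simp add: hs_conj)

lemma hs_cont: "continuous_on UNIV hs"
  using hs_diff has_derivative_continuous continuous_at_imp_continuous_on by blast


lemma D_nonneg: "x \<in> interior C \<Longrightarrow> z \<in> interior C \<Longrightarrow> 0 \<le> bregman hr x z"
  using gi[of z x] unfolding bregman_def by simp

lemma bregman_hs: assumes x: "x \<in> interior C"
  shows "bregman hs v (Gh x) = bregman hr x (Phi v)"
proof -
  have "hs (Gh x) = inner x (Gh x) - hr x" unfolding hs_def Phi_Gh[OF x] ..
  then show ?thesis unfolding bregman_def grad_hs Phi_Gh[OF x] Gh_Phi
    by (simp add: hs_def inner_diff_left inner_diff_right inner_commute)
qed

lemma hs_mid: "hs ((1/2) *\<^sub>R (a + b)) \<le> (1/2) * hs a + (1/2) * hs b"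
proof -
  let ?m = "(1/2) *\<^sub>R (a + b)" let ?z = "Phi ?m"
  have "hs ?m = (1/2) * (inner ?z a - hr ?z) + (1/2) * (inner ?z b - hr ?z)"
    unfolding hs_def by (simp add: inner_add_right algebra_simps)
  also have "\<dots> \<le> (1/2) * hs a + (1/2) * hs b"
    using hs_ge[OF Phi_int, of ?m a] hs_ge[OF Phi_int, of ?m b] by (intro add_mono mult_left_mono) auto
  finally show ?thesis .
qed

lemma step_ineq:
  fixes \<phi> :: "'a \<Rightarrow> real"
  assumes cv: "convex_on (interior C) \<phi>" and df: "\<forall>x\<in>interior C. \<phi> differentiable (at x)"
    and sm: "rel_smooth \<phi> hr L (interior C)" and eta: "0 < \<eta>" "2 * \<eta> * L \<le> 1"
    and x: "x \<in> interior C" and xs: "xs \<in> interior C"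
  shows "bregman hr xs (Phi (Gh x - \<eta> *\<^sub>R grad \<phi> x)) \<le>
           bregman hr xs x - \<eta> * bregman \<phi> xs x - \<eta> * inner (grad \<phi> xs) (x - xs)
           + (1/2) * bregman hs (Gh x - (2 * \<eta>) *\<^sub>R grad \<phi> xs) (Gh x)"
proof -
  define g where "g = grad \<phi> x"
  define gs where "gs = grad \<phi> xs"
  define y where "y = Gh x"
  define xp where "xp = Phi (y - \<eta> *\<^sub>R g)"
  define a where "a = y - (2 * \<eta>) *\<^sub>R (g - gs)"
  define b where "b = y - (2 * \<eta>) *\<^sub>R gs"
  define z where "z = Phi a"
  have xpi: "xp \<in> interior C" and zi: "z \<in> interior C" using Phi_int by (auto simp: xp_def z_def)
  have Gxp: "Gh xp = y - \<eta> *\<^sub>R g" and Gz: "Gh z = a" using Gh_Phi by (auto simp: xp_def z_def)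
  have three: "bregman hr xs xp = bregman hr xs x + bregman hr x xp - \<eta> * inner g (x - xs)"
    unfolding bregman_def Gxp y_def[symmetric]
    by (simp add: inner_diff_left inner_diff_right algebra_simps)
  \<comment> \<open>midpoint convexity\<close>
  have hh: "(1/2::real) *\<^sub>R v + (1/2) *\<^sub>R v = v" for v :: 'a by (simp flip: scaleR_add_left)
  have mid: "(1/2) *\<^sub>R (a + b) = y - \<eta> *\<^sub>R g"
    by (simp add: a_def b_def algebra_simps hh)
  have "bregman hr x xp = bregman hs (y - \<eta> *\<^sub>R g) y"
    unfolding y_def xp_def by (rule bregman_hs[OF x, symmetric])
  also have "\<dots> \<le> (1/2) * bregman hs a y + (1/2) * bregman hs b y"
  proof -
    have "hs (y - \<eta> *\<^sub>R g) \<le> (1/2) * hs a + (1/2) * hs b" using hs_mid[of a b] mid by simp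
    moreover have "inner (grad hs y) ((y - \<eta> *\<^sub>R g) - y) =
        (1/2) * inner (grad hs y) (a - y) + (1/2) * inner (grad hs y) (b - y)"
      unfolding a_def b_def by (simp add: inner_diff_right inner_scaleR_right algebra_simps)
    ultimately show ?thesis unfolding bregman_def by argo
  qed
  finally have m1: "bregman hr x xp \<le> (1/2) * bregman hs a y + (1/2) * bregman hs b y" .
  have Ba: "bregman hs a y = bregman hr x z" unfolding y_def z_def by (rule bregman_hs[OF x])
  have Dzx: "0 \<le> bregman hr z x" using D_nonneg[OF zi x] .
  have E1: "bregman hr x z + bregman hr z x = 2 * \<eta> * inner (g - gs) (x - z)"
    unfolding bregman_def Gz y_def[symmetric] a_def
    by (simp add: inner_diff_left inner_diff_right algebra_simps)
  have smz: "\<phi> z - \<phi> x - inner g (z - x) \<le> L * bregman hr z x"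
    using sm zi x unfolding rel_smooth_def bregman_def g_def by blast
  have giz: "\<phi> xs + inner gs (z - xs) \<le> \<phi> z"
    unfolding gs_def using grad_ineq[OF cv xs zi] df xs by blast
  have P: "inner (g - gs) (x - z) \<le> bregman \<phi> x xs + L * bregman hr z x"
    using smz giz unfolding bregman_def gs_def[symmetric]
    by (simp add: inner_diff_left inner_diff_right algebra_simps)
  have "2 * \<eta> * inner (g - gs) (x - z) \<le> 2 * \<eta> * (bregman \<phi> x xs + L * bregman hr z x)"
    using P eta by (intro mult_left_mono) auto
  moreover have "2 * \<eta> * L * bregman hr z x \<le> bregman hr z x"
    using eta(2) Dzx mult_right_mono by fastforce
  ultimately have key: "bregman hs a y \<le> 2 * \<eta> * bregman \<phi> x xs"
    using E1 Ba by (simp add: algebra_simps)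
  have comb: "bregman \<phi> x xs - inner g (x - xs) = - bregman \<phi> xs x - inner gs (x - xs)"
    unfolding bregman_def g_def gs_def by (simp add: inner_diff_left inner_diff_right algebra_simps)
  have "bregman hr xs xp \<le> bregman hr xs x + \<eta> * bregman \<phi> x xs + (1/2) * bregman hs b y - \<eta> * inner g (x - xs)"
    using three m1 key by simp
  also have "\<dots> = bregman hr xs x - \<eta> * bregman \<phi> xs x - \<eta> * inner gs (x - xs) + (1/2) * bregman hs b y"
  proof -
    have "\<eta> * (bregman \<phi> x xs - inner g (x - xs)) = \<eta> * (- bregman \<phi> xs x - inner gs (x - xs))"
      using comb by simp
    then show ?thesis by (simp add: algebra_simps)
  qed
  finally show ?thesis unfolding xp_def y_def g_def gs_def b_def .
qed


lemma hrPhi_cont: "continuous_on UNIV (\<lambda>v. hr (Phi v))"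
  using continuous_on_compose2[OF hr_cont Phi_cont] Phi_int by blast

lemma DPhi_eq: "bregman hr xs (Phi v) = hr xs - hr (Phi v) - inner v (xs - Phi v)"
  unfolding bregman_def Gh_Phi ..

lemma DPhi_cont: "continuous_on UNIV (\<lambda>v. bregman hr xs (Phi v))"
  unfolding DPhi_eq using hrPhi_cont Phi_cont by (intro continuous_intros) auto

lemma Dhs_cont: "continuous_on UNIV (\<lambda>v. bregman hs v y)"
  unfolding bregman_def using hs_cont by (intro continuous_intros) auto

end

locale bstoch = bsetup C h + M: prob_space M
  for C :: "'a::euclidean_space set" and h and M :: "'b measure" +
  fixes F :: "'b \<Rightarrow> 'a \<Rightarrow> real" and f :: "'a \<Rightarrow> real" and xs :: 'a and L \<eta> :: real
  assumes F_meas: "(\<lambda>p. grad (F (fst p)) (snd p)) \<in> borel_measurable (M \<Otimes>\<^sub>M borel)"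
    and F_diff: "\<forall>b\<in>space M. \<forall>x\<in>interior C. F b differentiable (at x)"
    and F_convex: "\<forall>b\<in>space M. convex_on (interior C) (F b)"
    and F_smooth: "\<forall>b\<in>space M. rel_smooth (F b) (fin h) L (interior C)"
    and F_mean: "\<forall>x\<in>interior C. integrable M (\<lambda>b. F b x) \<and> f x = (\<integral>b. F b x \<partial>M)"
    and f_diff: "\<forall>x\<in>interior C. f differentiable (at x)"
    and f_convex: "convex_on (interior C) f"
    and f_smooth: "rel_smooth f (fin h) L (interior C)"
    and xs: "xs \<in> interior C" "grad f xs = 0"
    and eta: "\<eta> > 0" "2 * \<eta> * L \<le> 1"
begin

abbreviation "G b x \<equiv> grad (F b) x"

lemma G_meas: "(\<lambda>b. G b y) \<in> borel_measurable M"
proof -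
  have "(\<lambda>b. (b, y)) \<in> measurable M (M \<Otimes>\<^sub>M borel)" by measurable
  from measurable_compose[OF this F_meas] show ?thesis by simp
qed

lemma F_int: "y \<in> interior C \<Longrightarrow> integrable M (\<lambda>b. F b y)"
  using F_mean by blast

lemma small_step: assumes y: "y \<in> interior C"
  obtains s0 where "s0 > 0" "\<And>s. \<bar>s\<bar> \<le> s0 \<Longrightarrow> y + s *\<^sub>R w \<in> interior C"
proof -
  obtain r where r: "r > 0" "ball y r \<subseteq> interior C"
    using y open_contains_ball[of "interior C"] by blast
  define s0 where "s0 = r / (2 * (norm w + 1))"
  have "0 < 2 * (norm w + 1)" by (smt (verit) norm_ge_zero)
  then have s0: "s0 > 0" using r by (simp add: s0_def)
  have "y + s *\<^sub>R w \<in> interior C" if "\<bar>s\<bar> \<le> s0" for s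
  proof -
    have "norm (s *\<^sub>R w) \<le> s0 * norm w" using that by (simp add: mult_right_mono)
    also have "\<dots> < r"
    proof -
      have "s0 * norm w \<le> s0 * (norm w + 1)" using s0 by simp
      also have "\<dots> = r / 2"
      proof -
        have nz: "norm w + 1 \<noteq> 0" by (smt (verit) norm_ge_zero)
        show ?thesis unfolding s0_def using nz by (simp add: field_simps)
      qed
      finally show ?thesis using r by simp
    qed
    finally have "y + s *\<^sub>R w \<in> ball y r" by (simp add: dist_norm)
    then show ?thesis using r by blast
  qed
  then show ?thesis using that s0 by blast
qed

lemma Gw_bounds:
  assumes b: "b \<in> space M" and y: "y \<in> interior C" and s: "s > 0"
    and yp: "y + s *\<^sub>R w \<in> interior C" and ym: "y - s *\<^sub>R w \<in> interior C"
  shows "(F b y - F b (y - s *\<^sub>R w)) / s \<le> inner (G b y) w"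
    and "inner (G b y) w \<le> (F b (y + s *\<^sub>R w) - F b y) / s"
proof -
  have d: "F b differentiable (at y)" using F_diff b y by blast
  have cv: "convex_on (interior C) (F b)" using F_convex b by blast
  have "F b y + inner (G b y) ((y - s *\<^sub>R w) - y) \<le> F b (y - s *\<^sub>R w)"
    by (rule grad_ineq[OF cv y ym d])
  then have "F b y - F b (y - s *\<^sub>R w) \<le> s * inner (G b y) w" by simp
  then show "(F b y - F b (y - s *\<^sub>R w)) / s \<le> inner (G b y) w" using s by (simp add: divide_le_eq mult.commute)
  have "F b y + inner (G b y) ((y + s *\<^sub>R w) - y) \<le> F b (y + s *\<^sub>R w)"
    by (rule grad_ineq[OF cv y yp d])
  then have "s * inner (G b y) w \<le> F b (y + s *\<^sub>R w) - F b y" by simp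
  then show "inner (G b y) w \<le> (F b (y + s *\<^sub>R w) - F b y) / s" using s by (simp add: le_divide_eq mult.commute)
qed

lemma Gw_int: assumes y: "y \<in> interior C" shows "integrable M (\<lambda>b. inner (G b y) w)"
proof -
  obtain s0 where s0: "s0 > 0" "\<And>s. \<bar>s\<bar> \<le> s0 \<Longrightarrow> y + s *\<^sub>R w \<in> interior C"
    using small_step[OF y] by blast
  have yp: "y + s0 *\<^sub>R w \<in> interior C" and ym: "y - s0 *\<^sub>R w \<in> interior C"
    using s0(2)[of s0] s0(2)[of "-s0"] s0(1) by auto
  let ?B = "\<lambda>b. \<bar>(F b (y + s0 *\<^sub>R w) - F b y) / s0\<bar> + \<bar>(F b y - F b (y - s0 *\<^sub>R w)) / s0\<bar>"
  have iB: "integrable M ?B"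
    using F_int[OF y] F_int[OF yp] F_int[OF ym] by auto
  show ?thesis
  proof (rule Bochner_Integration.integrable_bound[OF iB])
    show "(\<lambda>b. inner (G b y) w) \<in> borel_measurable M" using G_meas by measurable
    show "AE b in M. norm (inner (G b y) w) \<le> norm (?B b)"
    proof (rule AE_I2)
      fix b assume b: "b \<in> space M"
      note bb = Gw_bounds[OF b y s0(1) yp ym]
      have gen: "\<bar>g\<bar> \<le> \<bar>up\<bar> + \<bar>lo\<bar>" if "lo \<le> g" "g \<le> up" for lo g up :: real
        using that by linarith
      show "norm (inner (G b y) w) \<le> norm (?B b)"
        by (simp only: real_norm_def) (rule order.trans[OF gen[OF bb] abs_ge_self])
    qed
  qed
qed

lemma E_Gw_lower: assumes y: "y \<in> interior C" shows "inner (grad f y) w \<le> (\<integral>b. inner (G b y) w \<partial>M)"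
proof -
  obtain s0 where s0: "s0 > 0" "\<And>s. \<bar>s\<bar> \<le> s0 \<Longrightarrow> y + s *\<^sub>R w \<in> interior C"
    using small_step[OF y] by blast
  have lim: "((\<lambda>t. (f (y + t *\<^sub>R (-w)) - f y) / t) \<longlongrightarrow> inner (grad f y) (-w)) (at_right 0)"
    using dirderiv f_diff y by blast
  then have lim2: "((\<lambda>t. - ((f (y + t *\<^sub>R (-w)) - f y) / t)) \<longlongrightarrow> inner (grad f y) w) (at_right 0)"
    using tendsto_minus by fastforce
  have ev: "eventually (\<lambda>t. - ((f (y + t *\<^sub>R (-w)) - f y) / t) \<le> (\<integral>b. inner (G b y) w \<partial>M)) (at_right 0)"
  proof -
    have "eventually (\<lambda>t. t \<in> {0<..<s0}) (at_right (0::real))"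
      using s0(1) by (simp add: eventually_at_right_field) (auto intro!: exI[of _ s0])
    then show ?thesis
    proof eventually_elim
      case (elim t)
      then have t: "0 < t" "t \<le> s0" by auto
      have yp: "y + t *\<^sub>R w \<in> interior C" and ym: "y - t *\<^sub>R w \<in> interior C"
        using s0(2)[of t] s0(2)[of "-t"] t by auto
      have "(\<integral>b. (F b y - F b (y - t *\<^sub>R w)) / t \<partial>M) \<le> (\<integral>b. inner (G b y) w \<partial>M)"
        using Gw_bounds(1)[OF _ y t(1) yp ym] F_int[OF y] F_int[OF ym] Gw_int[OF y]
        by (intro integral_mono) auto
      moreover have "(\<integral>b. (F b y - F b (y - t *\<^sub>R w)) / t \<partial>M) = (f y - f (y - t *\<^sub>R w)) / t"
      proof -
        have "(\<integral>b. F b y - F b (y - t *\<^sub>R w) \<partial>M) = f y - f (y - t *\<^sub>R w)"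
          using F_int[OF y] F_int[OF ym] F_mean y ym by (simp add: Bochner_Integration.integral_diff)
        then show ?thesis by simp
      qed
      ultimately have "(f y - f (y - t *\<^sub>R w)) / t \<le> (\<integral>b. inner (G b y) w \<partial>M)" by linarith
      moreover have "- ((f (y + t *\<^sub>R (-w)) - f y) / t) = (f y - f (y - t *\<^sub>R w)) / t"
        by (simp add: minus_divide_left)
      ultimately show ?case by simp
    qed
  qed
  show ?thesis by (rule tendsto_upperbound[OF lim2 ev]) simp
qed

lemma E_Gw: assumes y: "y \<in> interior C" shows "(\<integral>b. inner (G b y) w \<partial>M) = inner (grad f y) w"
proof -
  have "inner (grad f y) (-w) \<le> (\<integral>b. inner (G b y) (-w) \<partial>M)" by (rule E_Gw_lower[OF y])
  then have "(\<integral>b. inner (G b y) w \<partial>M) \<le> inner (grad f y) w" by simp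
  with E_Gw_lower[OF y, of w] show ?thesis by simp
qed


lemma Df_nonneg: "x \<in> interior C \<Longrightarrow> 0 \<le> bregman f xs x"
  using grad_ineq[OF f_convex, of x xs] f_diff xs unfolding bregman_def by auto

lemma ER: assumes x: "x \<in> interior C"
  shows "integrable M (\<lambda>b. \<eta> * bregman (F b) xs x + \<eta> * inner (G b xs) (x - xs))"
    and "(\<integral>b. \<eta> * bregman (F b) xs x + \<eta> * inner (G b xs) (x - xs) \<partial>M) = \<eta> * bregman f xs x"
proof -
  have eq: "(\<lambda>b. \<eta> * bregman (F b) xs x + \<eta> * inner (G b xs) (x - xs)) =
      (\<lambda>b. \<eta> * (F b xs - F b x - inner (G b x) (xs - x) + inner (G b xs) (x - xs)))"
    unfolding bregman_def by (simp add: algebra_simps)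
  have i1: "integrable M (\<lambda>b. F b xs - F b x - inner (G b x) (xs - x) + inner (G b xs) (x - xs))"
    using F_int[OF x] F_int[OF xs(1)] Gw_int[OF x] Gw_int[OF xs(1)] by auto
  then show "integrable M (\<lambda>b. \<eta> * bregman (F b) xs x + \<eta> * inner (G b xs) (x - xs))"
    unfolding eq by auto
  have "(\<integral>b. F b xs - F b x - inner (G b x) (xs - x) + inner (G b xs) (x - xs) \<partial>M)
      = (\<integral>b. F b xs \<partial>M) - (\<integral>b. F b x \<partial>M) - (\<integral>b. inner (G b x) (xs - x) \<partial>M) + (\<integral>b. inner (G b xs) (x - xs) \<partial>M)"
    using F_int[OF x] F_int[OF xs(1)] Gw_int[OF x] Gw_int[OF xs(1)]
    by (simp add: Bochner_Integration.integral_diff Bochner_Integration.integral_add)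
  also have "\<dots> = bregman f xs x"
    unfolding bregman_def E_Gw[OF x] E_Gw[OF xs(1)] using F_mean x xs by simp
  finally show "(\<integral>b. \<eta> * bregman (F b) xs x + \<eta> * inner (G b xs) (x - xs) \<partial>M) = \<eta> * bregman f xs x"
    unfolding eq by simp
qed

lemma det_step: assumes x: "x \<in> interior C"
  shows "(\<integral>\<^sup>+b. ennreal (bregman hr xs (Phi (Gh x - \<eta> *\<^sub>R G b x))) \<partial>M) + ennreal (\<eta> * bregman f xs x)
    \<le> ennreal (bregman hr xs x) + ennreal (1/2) *
       (\<integral>\<^sup>+b. ennreal (bregman hs (Gh x - (2 * \<eta>) *\<^sub>R G b xs) (Gh x)) \<partial>M)"
proof -
  define K where "K b = bregman hr xs (Phi (Gh x - \<eta> *\<^sub>R G b x))" for b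
  define N where "N b = bregman hs (Gh x - (2 * \<eta>) *\<^sub>R G b xs) (Gh x)" for b
  define R where "R b = \<eta> * bregman (F b) xs x + \<eta> * inner (G b xs) (x - xs)" for b
  define Dx where "Dx = bregman hr xs x"
  note G_meas[measurable]
  have Km: "K \<in> borel_measurable M"
  proof -
    have "(\<lambda>b. Gh x - \<eta> *\<^sub>R G b x) \<in> borel_measurable M" by measurable
    from measurable_compose[OF this borel_measurable_continuous_onI[OF DPhi_cont]]
    show ?thesis by (simp add: K_def[abs_def])
  qed
  have Nm: "N \<in> borel_measurable M"
  proof -
    have "(\<lambda>b. Gh x - (2 * \<eta>) *\<^sub>R G b xs) \<in> borel_measurable M" by measurable
    from measurable_compose[OF this borel_measurable_continuous_onI[OF Dhs_cont]]
    show ?thesis by (simp add: N_def[abs_def])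
  qed
  have Knn: "0 \<le> K b" for b unfolding K_def by (rule D_nonneg[OF xs(1) Phi_int])
  have Nnn: "0 \<le> N b" for b unfolding N_def bregman_hs[OF x] by (rule D_nonneg[OF x Phi_int])
  have pw: "K b \<le> Dx - R b + 1/2 * N b" if b: "b \<in> space M" for b
    using step_ineq[of "F b" L \<eta> x xs] F_convex F_diff F_smooth eta x xs b
    unfolding K_def Dx_def R_def N_def by (simp add: algebra_simps)
  have Rint: "integrable M R" and RI: "(\<integral>b. R b \<partial>M) = \<eta> * bregman f xs x"
    using ER[OF x] unfolding R_def by auto
  have Dfnn: "0 \<le> \<eta> * bregman f xs x" using Df_nonneg[OF x] eta by simp
  show ?thesis
  proof (cases "(\<integral>\<^sup>+b. ennreal (N b) \<partial>M) = \<top>")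
    case True
    then show ?thesis unfolding N_def by (simp add: ennreal_mult_top)
  next
    case False
    then obtain rN where rN: "(\<integral>\<^sup>+b. ennreal (N b) \<partial>M) = ennreal rN" "0 \<le> rN"
      using ennreal_cases[of "(\<integral>\<^sup>+b. ennreal (N b) \<partial>M)"] by auto
    have Nint: "integrable M N"
      by (rule integrableI_nn_integral_finite[OF Nm _ rN(1)]) (simp add: Nnn)
    have NI: "(\<integral>b. N b \<partial>M) = rN"
      using nn_integral_eq_integral[OF Nint] rN Nnn by simp
    have Bint: "integrable M (\<lambda>b. Dx - R b + 1/2 * N b)" using Rint Nint by auto
    have Kint: "integrable M K"
    proof (rule Bochner_Integration.integrable_bound[OF Bint Km], rule AE_I2)
      fix b assume "b \<in> space M"
      then show "norm (K b) \<le> norm (Dx - R b + 1/2 * N b)" using pw Knn by fastforce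
    qed
    have "(\<integral>b. K b \<partial>M) \<le> (\<integral>b. Dx - R b + 1/2 * N b \<partial>M)"
      by (rule integral_mono[OF Kint Bint pw])
    also have "\<dots> = Dx - \<eta> * bregman f xs x + 1/2 * rN"
      using Rint Nint RI NI M.prob_space
      by (simp add: Bochner_Integration.integral_diff Bochner_Integration.integral_add)
    finally have KI: "(\<integral>b. K b \<partial>M) \<le> Dx - \<eta> * bregman f xs x + 1/2 * rN" .
    have KInn: "0 \<le> (\<integral>b. K b \<partial>M)" using Knn by (simp add: integral_nonneg)
    have "(\<integral>\<^sup>+b. ennreal (K b) \<partial>M) + ennreal (\<eta> * bregman f xs x)
        = ennreal ((\<integral>b. K b \<partial>M) + \<eta> * bregman f xs x)"
      using nn_integral_eq_integral[OF Kint] Knn KInn Dfnn by (simp add: ennreal_plus)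
    also have "\<dots> \<le> ennreal (Dx + 1/2 * rN)" using KI by (intro ennreal_leI) simp
    also have "\<dots> = ennreal Dx + ennreal (1/2) * ennreal rN"
    proof -
      have a: "ennreal (1/2 * rN) = ennreal (1/2) * ennreal rN" by (rule ennreal_mult) (use rN in auto)
      have b: "ennreal (Dx + 1/2 * rN) = ennreal Dx + ennreal (1/2 * rN)"
        by (rule ennreal_plus) (use rN D_nonneg[OF xs(1) x] in \<open>auto simp: Dx_def\<close>)
      show ?thesis unfolding b a ..
    qed
    finally show ?thesis unfolding K_def N_def Dx_def rN(1)[unfolded N_def] .
  qed
qed


definition "Ghm x = (if x \<in> interior C then Gh x else 0)"
definition "hrm x = (if x \<in> interior C then hr x else 0)"
definition "fm x = (if x \<in> interior C then f x else 0)"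
definition "Am x = hr xs - hrm x - inner (Ghm x) (xs - x)"
definition "Bm x = f xs - fm x - (\<integral>b. inner (G b x) (xs - x) \<partial>M)"

lemma intC_borel: "interior C \<in> sets borel" by simp

lemma Ghm_meas[measurable]: "Ghm \<in> borel_measurable borel"
  unfolding Ghm_def[abs_def]
  by (rule borel_measurable_continuous_on_if[OF intC_borel Gh_cont continuous_on_const])

lemma hrm_meas[measurable]: "hrm \<in> borel_measurable borel"
  unfolding hrm_def[abs_def]
  by (rule borel_measurable_continuous_on_if[OF intC_borel hr_cont continuous_on_const])

lemma f_cont: "continuous_on (interior C) f"
  using f_diff differentiable_imp_continuous_within continuous_at_imp_continuous_on
  by (metis differentiable_imp_continuous_within at_within_open open_interior)

lemma fm_meas[measurable]: "fm \<in> borel_measurable borel"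
  unfolding fm_def[abs_def]
  by (rule borel_measurable_continuous_on_if[OF intC_borel f_cont continuous_on_const])

lemma Gp_meas[measurable]: "(\<lambda>p. G (snd p) (fst p)) \<in> borel_measurable (borel \<Otimes>\<^sub>M M)"
proof -
  have "(\<lambda>p. (snd p, fst p)) \<in> measurable (borel \<Otimes>\<^sub>M M) (M \<Otimes>\<^sub>M borel)" by measurable
  from measurable_compose[OF this F_meas] show ?thesis by simp
qed

lemma Am_meas[measurable]: "Am \<in> borel_measurable borel"
  unfolding Am_def[abs_def] by measurable

lemma Am_eq: "x \<in> interior C \<Longrightarrow> Am x = bregman hr xs x"
  unfolding Am_def bregman_def Ghm_def hrm_def by simp

lemma Bm_meas[measurable]: "Bm \<in> borel_measurable borel"
proof -
  have "(\<lambda>p. inner (G (snd p) (fst p)) (xs - fst p)) \<in> borel_measurable (borel \<Otimes>\<^sub>M M)" by measurable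
  then have "(\<lambda>x. \<integral>b. inner (G b x) (xs - x) \<partial>M) \<in> borel_measurable borel"
    by (intro M.borel_measurable_lebesgue_integral) (simp add: case_prod_beta)
  then show ?thesis unfolding Bm_def[abs_def] by measurable
qed

lemma Bm_eq: "x \<in> interior C \<Longrightarrow> Bm x = bregman f xs x"
  unfolding Bm_def bregman_def fm_def using E_Gw by simp

lemma Kt_meas: "(\<lambda>p. ennreal (bregman hr xs (Phi (Ghm (fst p) - \<eta> *\<^sub>R G (snd p) (fst p))))) \<in> borel_measurable (borel \<Otimes>\<^sub>M M)"
proof -
  have "(\<lambda>p. Ghm (fst p) - \<eta> *\<^sub>R G (snd p) (fst p)) \<in> borel_measurable (borel \<Otimes>\<^sub>M M)" by measurable
  from measurable_compose[OF this borel_measurable_continuous_onI[OF DPhi_cont]]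
  show ?thesis by measurable
qed

end

context bsetup begin

lemma bsgd_step_eq: "bsgd_step C h \<eta> g y = Phi (Gh y - \<eta> *\<^sub>R g)"
proof -
  let ?u = "Gh y - \<eta> *\<^sub>R g"
  have eq: "(ereal (\<eta> * inner g x) + bregman_e h x y \<le> ereal (\<eta> * inner g z) + bregman_e h z y) \<longleftrightarrow>
            (h x - ereal (inner x ?u) \<le> h z - ereal (inner z ?u))" for x z
    using h_ninf
    by (cases "h x"; cases "h z")
       (auto simp: bregman_e_def inner_diff_right inner_diff_left algebra_simps inner_commute)
  show ?thesis unfolding bsgd_step_def Phi_def eq ..
qed

end


theorem theorem2:
  fixes C :: "'a::euclidean_space set"
    and h :: "'a \<Rightarrow> ereal"
    and P :: "'w measure" and M :: "'b measure"
    and \<xi> :: "nat \<Rightarrow> 'w \<Rightarrow> 'b"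
    and F :: "'b \<Rightarrow> 'a \<Rightarrow> real" and f :: "'a \<Rightarrow> real"
    and x0 xs :: 'a and \<eta> L \<sigma>2 :: real and T :: nat
  assumes C: "closed C" "convex C"
    \<comment> \<open>standing assumption on h\<close>
    and h_ninf: "\<forall>x. h x \<noteq> -\<infinity>"
    and h_dom: "\<forall>x. x \<notin> C \<longrightarrow> h x = \<infinity>"
    and h_fin: "\<forall>x\<in>interior C. h x \<noteq> \<infinity>"
    and h_C1: "\<forall>x\<in>interior C. fin h differentiable (at x)"
    and h_C2: "\<exists>H :: 'a \<Rightarrow> 'a \<Rightarrow>\<^sub>L 'a. (\<forall>x\<in>interior C.
                 (grad (fin h) has_derivative blinfun_apply (H x)) (at x))
               \<and> continuous_on (interior C) H"
    and h_strict: "strict_convex_on (interior C) (fin h)"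
    and h_argmin: "\<forall>y. \<exists>!x. x \<in> C \<and> (\<forall>z\<in>C. h x - ereal (inner x y) \<le> h z - ereal (inner z y))"
    and h_argmin_int: "\<forall>y x. x \<in> C \<and> (\<forall>z\<in>C. h x - ereal (inner x y) \<le> h z - ereal (inner z y))
                              \<longrightarrow> x \<in> interior C"
    \<comment> \<open>probabilistic setting: xi_t i.i.d. with distribution M\<close>
    and P: "prob_space P" and M: "prob_space M"
    and \<xi>_meas: "\<forall>t. \<xi> t \<in> measurable P M"
    and \<xi>_distr: "\<forall>t. distr P M (\<xi> t) = M"
    and \<xi>_indep: "prob_space.indep_vars P (\<lambda>_. M) \<xi> UNIV"
    and F_meas: "(\<lambda>p. grad (F (fst p)) (snd p)) \<in> borel_measurable (M \<Otimes>\<^sub>M borel)"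
    \<comment> \<open>noise assumption\<close>
    and F_diff: "\<forall>b\<in>space M. \<forall>x\<in>interior C. F b differentiable (at x)"
    and F_convex: "\<forall>b\<in>space M. convex_on (interior C) (F b)"
    and F_smooth: "\<forall>b\<in>space M. rel_smooth (F b) (fin h) L (interior C)"
    and F_mean: "\<forall>x\<in>interior C. integrable M (\<lambda>b. F b x) \<and> f x = (\<integral>b. F b x \<partial>M)"
    and noise: "\<forall>t. AE \<omega> in P.
        (\<integral>\<^sup>+ b. ennreal (bregman (\<lambda>y. real_of_ereal (conj h y))
              (grad (fin h) (bsgd C h \<eta> F x0 (\<lambda>s. \<xi> s \<omega>) t) - (2 * \<eta>) *\<^sub>R grad (F b) xs)
              (grad (fin h) (bsgd C h \<eta> F x0 (\<lambda>s. \<xi> s \<omega>) t))) \<partial>M)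
        \<le> ennreal (2 * \<eta>\<^sup>2 * \<sigma>2)"
    and \<sigma>2: "\<sigma>2 \<ge> 0"
    \<comment> \<open>assumptions on f\<close>
    and f_diff: "\<forall>x\<in>interior C. f differentiable (at x)"
    and f_convex: "convex_on (interior C) f"
    and f_smooth: "rel_smooth f (fin h) L (interior C)"
    and L: "L \<ge> 0"
    and xs: "xs \<in> interior C" "\<forall>x\<in>interior C. f xs \<le> f x" "grad f xs = 0"
    \<comment> \<open>algorithm parameters\<close>
    and x0: "x0 \<in> interior C"
    and \<eta>: "\<eta> > 0" "2 * \<eta> * L \<le> 1"
    and T: "T \<ge> 1"
  shows "(\<integral>\<^sup>+ \<omega>. ennreal ((1 / real T) *
            (\<Sum>t\<in>{0..T}. bregman f xs (bsgd C h \<eta> F x0 (\<lambda>s. \<xi> s \<omega>) t))) \<partial>P)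
         \<le> ennreal (bregman (fin h) xs x0 / (\<eta> * real T) + \<eta> * \<sigma>2)"
proof -
  interpret bs: bstoch C h M F f xs L \<eta>
    using assms by (intro bstoch.intro bsetup.intro bstoch_axioms.intro) assumption+
  interpret P: prob_space P by (rule P)
  define X where "X t s = bsgd C h \<eta> F x0 s t" for t s
  have X0: "X 0 s = x0" for s by (simp add: X_def)
  have XS: "X (Suc t) s = bs.Phi (grad (fin h) (X t s) - \<eta> *\<^sub>R grad (F (s t)) (X t s))" for t s
    by (simp add: X_def bs.bsgd_step_eq)
  have Xint: "X t s \<in> interior C" for t s
    by (cases t) (auto simp: X0 XS x0 bs.Phi_int)
  have Xloc: "X t s = X t s'" if "\<forall>i<t. s i = s' i" for t s s'
    using that
  proof (induction t)
    case 0 then show ?case by (simp add: X0)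
  next
    case (Suc t) then show ?case by (simp add: XS)
  qed
  have Xmeas: "X t \<in> borel_measurable (PiM {..<t} (\<lambda>_. M))" for t
  proof (induction t)
    case 0 then show ?case by (simp add: X0)
  next
    case (Suc t)
    have r: "(\<lambda>s. restrict s {..<t}) \<in> measurable (PiM {..<Suc t} (\<lambda>_. M)) (PiM {..<t} (\<lambda>_. M))"
      by (rule measurable_restrict_subset) auto
    have a: "(\<lambda>s. X t (restrict s {..<t})) \<in> borel_measurable (PiM {..<Suc t} (\<lambda>_. M))"
      using measurable_compose[OF r Suc.IH] .
    have e: "(\<lambda>s. s t) \<in> measurable (PiM {..<Suc t} (\<lambda>_. M)) M"
      by (rule measurable_component_singleton) auto
    have pr: "(\<lambda>s. (X t (restrict s {..<t}), s t)) \<in> measurable (PiM {..<Suc t} (\<lambda>_. M)) (borel \<Otimes>\<^sub>M M)"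
      using measurable_Pair[OF a e] .
    have q0: "(\<lambda>p. bs.Ghm (fst p) - \<eta> *\<^sub>R grad (F (snd p)) (fst p)) \<in> borel_measurable (borel \<Otimes>\<^sub>M M)"
      by measurable
    have q: "(\<lambda>p. bs.Phi (bs.Ghm (fst p) - \<eta> *\<^sub>R grad (F (snd p)) (fst p))) \<in> borel_measurable (borel \<Otimes>\<^sub>M M)"
      using measurable_compose[OF q0 borel_measurable_continuous_onI[OF bs.Phi_cont]] by simp
    have comp: "(\<lambda>s. bs.Phi (bs.Ghm (X t (restrict s {..<t})) - \<eta> *\<^sub>R grad (F (s t)) (X t (restrict s {..<t}))))
        \<in> borel_measurable (PiM {..<Suc t} (\<lambda>_. M))"
      using measurable_compose[OF pr q] by simp
    show ?case
    proof (rule measurable_cong[THEN iffD1, OF _ comp])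
      fix s assume "s \<in> space (PiM {..<Suc t} (\<lambda>_. M))"
      have "X t (restrict s {..<t}) = X t s" by (rule Xloc) simp
      then show "bs.Phi (bs.Ghm (X t (restrict s {..<t})) - \<eta> *\<^sub>R grad (F (s t)) (X t (restrict s {..<t}))) = X (Suc t) s"
        by (simp add: XS bs.Ghm_def Xint)
    qed
  qed
  define xt where "xt t \<omega> = X t (\<lambda>s. \<xi> s \<omega>)" for t \<omega>
  have bsgd_eq: "bsgd C h \<eta> F x0 (\<lambda>s. \<xi> s \<omega>) t = xt t \<omega>" for t \<omega> by (simp add: xt_def X_def)
  have xt_int: "xt t \<omega> \<in> interior C" for t \<omega> by (simp add: xt_def Xint)
  have rmeas: "(\<lambda>\<omega>. \<lambda>i\<in>{..<t}. \<xi> i \<omega>) \<in> measurable P (PiM {..<t} (\<lambda>_. M))" for t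
    by (rule measurable_restrict) (use \<xi>_meas in auto)
  have xt_restr: "(\<lambda>\<omega>. X t (\<lambda>i\<in>{..<t}. \<xi> i \<omega>)) = xt t" for t
    by (rule ext) (simp add: xt_def, rule Xloc, simp)
  have xt_meas: "xt t \<in> borel_measurable P" for t
    using measurable_compose[OF rmeas Xmeas] xt_restr by simp
  have E8: "(\<integral>\<^sup>+\<omega>. K (xt t \<omega>, \<xi> t \<omega>) \<partial>P) = (\<integral>\<^sup>+\<omega>. (\<integral>\<^sup>+b. K (xt t \<omega>, b) \<partial>M) \<partial>P)"
    if K: "K \<in> borel_measurable (borel \<Otimes>\<^sub>M M)" for K t
  proof -
    define MY where "MY = PiM {..<t} (\<lambda>_::nat. M)"
    define MZ where "MZ = PiM {t} (\<lambda>_::nat. M)"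
    define Y where "Y \<omega> = (\<lambda>i\<in>{..<t}. \<xi> i \<omega>)" for \<omega>
    define Z where "Z \<omega> = (\<lambda>i\<in>{t}. \<xi> i \<omega>)" for \<omega>
    have Ym: "Y \<in> measurable P MY" unfolding Y_def MY_def
      by (rule measurable_restrict) (use \<xi>_meas in auto)
    have Zm: "Z \<in> measurable P MZ" unfolding Z_def MZ_def
      by (rule measurable_restrict) (use \<xi>_meas in auto)
    have ind: "P.indep_var MY Y MZ Z" unfolding MY_def MZ_def Y_def Z_def
      by (rule P.indep_var_restrict[OF \<xi>_indep]) auto
    have joint: "distr P MY Y \<Otimes>\<^sub>M distr P MZ Z = distr P (MY \<Otimes>\<^sub>M MZ) (\<lambda>\<omega>. (Y \<omega>, Z \<omega>))"
      using P.indep_var_distribution_eq[THEN iffD1, OF ind] by simp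
    define K' where "K' p = K (X t (fst p), snd p t)" for p
    have XmY: "X t \<in> borel_measurable MY" using Xmeas unfolding MY_def .
    have ev: "(\<lambda>s. s t) \<in> measurable MZ M" unfolding MZ_def by (rule measurable_component_singleton) auto
    have K'm: "K' \<in> borel_measurable (MY \<Otimes>\<^sub>M MZ)"
    proof -
      have "(\<lambda>p. (X t (fst p), snd p t)) \<in> measurable (MY \<Otimes>\<^sub>M MZ) (borel \<Otimes>\<^sub>M M)"
        using XmY ev by (intro measurable_Pair) (auto intro: measurable_compose[OF measurable_fst] measurable_compose[OF measurable_snd])
      from measurable_compose[OF this K] show ?thesis by (simp add: K'_def[abs_def])
    qed
    interpret DZ: prob_space "distr P MZ Z" by (rule P.prob_space_distr[OF Zm])
    have sets_eq: "sets (distr P MY Y \<Otimes>\<^sub>M distr P MZ Z) = sets (MY \<Otimes>\<^sub>M MZ)"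
      by (intro sets_pair_measure_cong) auto
    have K'm2: "K' \<in> borel_measurable (distr P MY Y \<Otimes>\<^sub>M distr P MZ Z)"
      using K'm measurable_cong_sets[OF sets_eq refl] by blast
    have pm: "(\<lambda>\<omega>. (Y \<omega>, Z \<omega>)) \<in> measurable P (MY \<Otimes>\<^sub>M MZ)" using Ym Zm by (rule measurable_Pair)
    have Kf: "(\<lambda>x. \<integral>\<^sup>+b. K (x, b) \<partial>M) \<in> borel_measurable borel"
      using bs.M.borel_measurable_nn_integral_fst[OF K] .
    have KfY: "(\<lambda>s. \<integral>\<^sup>+b. K (X t s, b) \<partial>M) \<in> borel_measurable MY"
      using measurable_compose[OF XmY Kf] .
    have inner: "(\<integral>\<^sup>+s'. K' (s, s') \<partial>distr P MZ Z) = (\<integral>\<^sup>+b. K (X t s, b) \<partial>M)" for s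
    proof -
      have m1: "(\<lambda>b. K (X t s, b)) \<in> borel_measurable M"
        by (rule measurable_compose_Pair1[OF _ K]) simp
      have "(\<lambda>s'. K' (s, s')) \<in> borel_measurable MZ"
        unfolding K'_def using measurable_compose[OF ev m1] by simp
      then have "(\<integral>\<^sup>+s'. K' (s, s') \<partial>distr P MZ Z) = (\<integral>\<^sup>+\<omega>. K' (s, Z \<omega>) \<partial>P)"
        by (intro nn_integral_distr[OF Zm]) simp
      also have "\<dots> = (\<integral>\<^sup>+\<omega>. K (X t s, \<xi> t \<omega>) \<partial>P)" by (simp add: K'_def Z_def)
      also have "\<dots> = (\<integral>\<^sup>+b. K (X t s, b) \<partial>distr P M (\<xi> t))"
        using \<xi>_meas m1 by (intro nn_integral_distr[symmetric]) auto
      also have "\<dots> = (\<integral>\<^sup>+b. K (X t s, b) \<partial>M)" using \<xi>_distr by simp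
      finally show ?thesis .
    qed
    have "(\<integral>\<^sup>+\<omega>. K (xt t \<omega>, \<xi> t \<omega>) \<partial>P) = (\<integral>\<^sup>+\<omega>. K' (Y \<omega>, Z \<omega>) \<partial>P)"
      using xt_restr[of t] by (intro nn_integral_cong) (simp add: K'_def Y_def Z_def fun_eq_iff)
    also have "\<dots> = (\<integral>\<^sup>+p. K' p \<partial>distr P (MY \<Otimes>\<^sub>M MZ) (\<lambda>\<omega>. (Y \<omega>, Z \<omega>)))"
      by (rule nn_integral_distr[symmetric, OF pm]) (simp add: K'm)
    also have "\<dots> = (\<integral>\<^sup>+p. K' p \<partial>(distr P MY Y \<Otimes>\<^sub>M distr P MZ Z))" by (simp add: joint)
    also have "\<dots> = (\<integral>\<^sup>+s. (\<integral>\<^sup>+s'. K' (s, s') \<partial>distr P MZ Z) \<partial>distr P MY Y)"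
      by (rule DZ.nn_integral_fst[OF K'm2, symmetric])
    also have "\<dots> = (\<integral>\<^sup>+s. (\<integral>\<^sup>+b. K (X t s, b) \<partial>M) \<partial>distr P MY Y)" by (simp add: inner)
    also have "\<dots> = (\<integral>\<^sup>+\<omega>. (\<integral>\<^sup>+b. K (X t (Y \<omega>), b) \<partial>M) \<partial>P)"
      by (rule nn_integral_distr[OF Ym]) (simp add: KfY)
    also have "\<dots> = (\<integral>\<^sup>+\<omega>. (\<integral>\<^sup>+b. K (xt t \<omega>, b) \<partial>M) \<partial>P)"
      using xt_restr[of t] by (simp add: Y_def fun_eq_iff)
    finally show ?thesis .
  qed
  define a where "a t = (\<integral>\<^sup>+\<omega>. ennreal (bregman (fin h) xs (xt t \<omega>)) \<partial>P)" for t
  define c where "c t = (\<integral>\<^sup>+\<omega>. ennreal (\<eta> * bregman f xs (xt t \<omega>)) \<partial>P)" for t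
  define d where "d = ennreal (\<eta>\<^sup>2 * \<sigma>2)"
  have A_meas: "(\<lambda>\<omega>. ennreal (bregman (fin h) xs (xt t \<omega>))) \<in> borel_measurable P" for t
  proof -
    have "(\<lambda>\<omega>. ennreal (bs.Am (xt t \<omega>))) \<in> borel_measurable P" using xt_meas by measurable
    then show ?thesis by (rule measurable_cong[THEN iffD1, rotated]) (simp add: bs.Am_eq xt_int)
  qed
  have B_meas: "(\<lambda>\<omega>. ennreal (\<eta> * bregman f xs (xt t \<omega>))) \<in> borel_measurable P" for t
  proof -
    have "(\<lambda>\<omega>. ennreal (\<eta> * bs.Bm (xt t \<omega>))) \<in> borel_measurable P" using xt_meas by measurable
    then show ?thesis by (rule measurable_cong[THEN iffD1, rotated]) (simp add: bs.Bm_eq xt_int)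
  qed
  have hs_eq: "(\<lambda>y. real_of_ereal (conj h y)) = bs.hs" by (rule ext) (rule bs.hs_conj)
  have step: "a (Suc t) + c t \<le> a t + d" for t
  proof -
    let ?K = "\<lambda>p. ennreal (bregman (fin h) xs (bs.Phi (bs.Ghm (fst p) - \<eta> *\<^sub>R grad (F (snd p)) (fst p))))"
    let ?N = "\<lambda>\<omega>. (\<integral>\<^sup>+b. ennreal (bregman bs.hs (grad (fin h) (xt t \<omega>) - (2 * \<eta>) *\<^sub>R grad (F b) xs) (grad (fin h) (xt t \<omega>))) \<partial>M)"
    have xS: "xt (Suc t) \<omega> = bs.Phi (bs.Ghm (xt t \<omega>) - \<eta> *\<^sub>R grad (F (\<xi> t \<omega>)) (xt t \<omega>))" for \<omega>
      by (simp add: xt_def XS bs.Ghm_def Xint)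
    have "a (Suc t) = (\<integral>\<^sup>+\<omega>. ?K (xt t \<omega>, \<xi> t \<omega>) \<partial>P)" unfolding a_def xS by simp
    also have "\<dots> = (\<integral>\<^sup>+\<omega>. (\<integral>\<^sup>+b. ?K (xt t \<omega>, b) \<partial>M) \<partial>P)"
      by (rule E8[OF bs.Kt_meas])
    finally have a1: "a (Suc t) = \<dots>" .
    have Km: "(\<lambda>\<omega>. \<integral>\<^sup>+b. ?K (xt t \<omega>, b) \<partial>M) \<in> borel_measurable P"
      using measurable_compose[OF xt_meas bs.M.borel_measurable_nn_integral_fst[OF bs.Kt_meas]] by simp
    have "a (Suc t) + c t = (\<integral>\<^sup>+\<omega>. (\<integral>\<^sup>+b. ?K (xt t \<omega>, b) \<partial>M) + ennreal (\<eta> * bregman f xs (xt t \<omega>)) \<partial>P)"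
      unfolding a1 c_def by (rule nn_integral_add[symmetric, OF Km B_meas])
    also have "\<dots> \<le> (\<integral>\<^sup>+\<omega>. ennreal (bregman (fin h) xs (xt t \<omega>)) + ennreal (1/2) * ?N \<omega> \<partial>P)"
    proof (rule nn_integral_mono)
      fix \<omega>
      have "bs.Ghm (xt t \<omega>) = grad (fin h) (xt t \<omega>)" by (simp add: bs.Ghm_def xt_int)
      then show "(\<integral>\<^sup>+b. ?K (xt t \<omega>, b) \<partial>M) + ennreal (\<eta> * bregman f xs (xt t \<omega>))
          \<le> ennreal (bregman (fin h) xs (xt t \<omega>)) + ennreal (1/2) * ?N \<omega>"
        using bs.det_step[OF xt_int[of t \<omega>]] by simp
    qed
    also have "\<dots> \<le> (\<integral>\<^sup>+\<omega>. ennreal (bregman (fin h) xs (xt t \<omega>)) + d \<partial>P)"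
    proof (rule nn_integral_mono_AE)
      have "AE \<omega> in P. ?N \<omega> \<le> ennreal (2 * \<eta>\<^sup>2 * \<sigma>2)"
        using noise[rule_format, of t] unfolding bsgd_eq hs_eq .
      then show "AE \<omega> in P. ennreal (bregman (fin h) xs (xt t \<omega>)) + ennreal (1/2) * ?N \<omega>
          \<le> ennreal (bregman (fin h) xs (xt t \<omega>)) + d"
      proof eventually_elim
        case (elim \<omega>)
        have "ennreal (1/2) * ?N \<omega> \<le> ennreal (1/2) * ennreal (2 * \<eta>\<^sup>2 * \<sigma>2)"
          using elim by (rule mult_left_mono) simp
        also have "\<dots> = ennreal (1/2 * (2 * \<eta>\<^sup>2 * \<sigma>2))"
          by (rule ennreal_mult[symmetric]) (use \<sigma>2 in auto)
        also have "\<dots> = d" unfolding d_def by simp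
        finally show ?case by (rule add_left_mono)
      qed
    qed
    also have "\<dots> = a t + d"
      unfolding a_def using A_meas[of t] P.emeasure_space_1 by (simp add: nn_integral_add)
    finally show ?thesis .
  qed
  have tele: "a n + (\<Sum>t<n. c t) \<le> a 0 + of_nat n * d" for n
  proof (induction n)
    case 0 then show ?case by simp
  next
    case (Suc n)
    have "a (Suc n) + (\<Sum>t<Suc n. c t) = (a (Suc n) + c n) + (\<Sum>t<n. c t)" by (simp add: algebra_simps)
    also have "\<dots> \<le> (a n + d) + (\<Sum>t<n. c t)" by (rule add_right_mono[OF step])
    also have "\<dots> = (a n + (\<Sum>t<n. c t)) + d" by (simp add: algebra_simps)
    also have "\<dots> \<le> (a 0 + of_nat n * d) + d" by (rule add_right_mono[OF Suc.IH])
    also have "\<dots> = a 0 + of_nat (Suc n) * d" by (simp add: algebra_simps)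
    finally show ?case .
  qed
  have D0: "0 \<le> bregman (fin h) xs x0" by (rule bs.D_nonneg[OF xs(1) x0])
  have a0: "a 0 = ennreal (bregman (fin h) xs x0)"
    unfolding a_def using P.emeasure_space_1 by (simp add: xt_def X0)
  have cT: "c T \<le> a T" unfolding c_def a_def
  proof (rule nn_integral_mono, rule ennreal_leI)
    fix \<omega>
    let ?x = "xt T \<omega>"
    have "bregman f xs ?x \<le> L * bregman (fin h) xs ?x"
      using f_smooth xs(1) xt_int[of T \<omega>] unfolding rel_smooth_def by blast
    then have "\<eta> * bregman f xs ?x \<le> \<eta> * (L * bregman (fin h) xs ?x)" using \<eta> by (intro mult_left_mono) auto
    also have "\<dots> \<le> bregman (fin h) xs ?x"
    proof -
      have nn: "0 \<le> bregman (fin h) xs ?x" by (rule bs.D_nonneg[OF xs(1) xt_int])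
      have "\<eta> * L \<le> 1" using \<eta> L by linarith
      then have "(\<eta> * L) * bregman (fin h) xs ?x \<le> 1 * bregman (fin h) xs ?x" using nn by (intro mult_right_mono) auto
      then show ?thesis by (simp add: mult.assoc)
    qed
    finally show "\<eta> * bregman f xs ?x \<le> bregman (fin h) xs ?x" .
  qed
  have sumc: "(\<Sum>t\<in>{0..T}. c t) \<le> ennreal (bregman (fin h) xs x0) + of_nat T * d"
  proof -
    have "{0..T} = insert T {..<T}" by auto
    then have "(\<Sum>t\<in>{0..T}. c t) = c T + (\<Sum>t<T. c t)" by simp
    also have "\<dots> \<le> a T + (\<Sum>t<T. c t)" by (rule add_right_mono[OF cT])
    also have "\<dots> \<le> a 0 + of_nat T * d" by (rule tele)
    finally show ?thesis unfolding a0 .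
  qed
  have Tpos: "0 < real T" using T by simp
  have Dfnn: "0 \<le> bregman f xs (xt t \<omega>)" for t \<omega> by (rule bs.Df_nonneg[OF xt_int])
  have pw: "ennreal ((1 / real T) * (\<Sum>t\<in>{0..T}. bregman f xs (xt t \<omega>)))
      = ennreal (1 / (\<eta> * real T)) * (\<Sum>t\<in>{0..T}. ennreal (\<eta> * bregman f xs (xt t \<omega>)))" for \<omega>
  proof -
    have "(\<Sum>t\<in>{0..T}. ennreal (\<eta> * bregman f xs (xt t \<omega>))) = ennreal (\<Sum>t\<in>{0..T}. \<eta> * bregman f xs (xt t \<omega>))"
      using Dfnn \<eta> by (intro sum_ennreal) auto
    moreover have "(1 / real T) * (\<Sum>t\<in>{0..T}. bregman f xs (xt t \<omega>)) =
        (1 / (\<eta> * real T)) * (\<Sum>t\<in>{0..T}. \<eta> * bregman f xs (xt t \<omega>))"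
      using \<eta> Tpos by (simp add: sum_distrib_left[symmetric])
    moreover have "ennreal ((1 / (\<eta> * real T)) * (\<Sum>t\<in>{0..T}. \<eta> * bregman f xs (xt t \<omega>)))
        = ennreal (1 / (\<eta> * real T)) * ennreal (\<Sum>t\<in>{0..T}. \<eta> * bregman f xs (xt t \<omega>))"
      using \<eta> Tpos Dfnn by (intro ennreal_mult) (auto intro: sum_nonneg)
    ultimately show ?thesis by simp
  qed
  have "(\<integral>\<^sup>+\<omega>. ennreal ((1 / real T) * (\<Sum>t\<in>{0..T}. bregman f xs (bsgd C h \<eta> F x0 (\<lambda>s. \<xi> s \<omega>) t))) \<partial>P)
      = (\<integral>\<^sup>+\<omega>. ennreal (1 / (\<eta> * real T)) * (\<Sum>t\<in>{0..T}. ennreal (\<eta> * bregman f xs (xt t \<omega>))) \<partial>P)"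
    unfolding bsgd_eq pw ..
  also have "\<dots> = ennreal (1 / (\<eta> * real T)) * (\<Sum>t\<in>{0..T}. c t)"
    unfolding c_def using B_meas
    by (simp add: nn_integral_cmult nn_integral_sum borel_measurable_sum)
  also have "\<dots> \<le> ennreal (1 / (\<eta> * real T)) * (ennreal (bregman (fin h) xs x0) + of_nat T * d)"
    by (rule mult_left_mono[OF sumc]) simp
  also have "\<dots> = ennreal (bregman (fin h) xs x0 / (\<eta> * real T) + \<eta> * \<sigma>2)"
  proof -
    let ?D = "bregman (fin h) xs x0" and ?q = "\<eta>\<^sup>2 * \<sigma>2"
    have q: "0 \<le> ?q" using \<sigma>2 by simp
    have e1: "of_nat T * d = ennreal (real T * ?q)"
      unfolding d_def ennreal_of_nat_eq_real_of_nat by (rule ennreal_mult[symmetric]) (use q in auto)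
    have e2: "ennreal ?D + ennreal (real T * ?q) = ennreal (?D + real T * ?q)"
      by (rule ennreal_plus[symmetric]) (use D0 q in auto)
    have e3: "ennreal (1 / (\<eta> * real T)) * ennreal (?D + real T * ?q) = ennreal (1 / (\<eta> * real T) * (?D + real T * ?q))"
      by (rule ennreal_mult[symmetric]) (use D0 q \<eta> Tpos in auto)
    have e4: "(1 / (\<eta> * real T)) * (?D + real T * ?q) = ?D / (\<eta> * real T) + \<eta> * \<sigma>2"
      using \<eta> Tpos by (simp add: field_simps power2_eq_square)
    show ?thesis unfolding e1 e2 e3 e4 ..
  qed
  finally show ?thesis .
qed

end
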